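(* Let $M$ be the statistical manifold of the beta-logistic distributions $$p(x;\theta^1,\theta^2)=\frac{2^{1-\theta^1}\operatorname{sech}^{\theta^1}(x)\,e^{\theta^2x}}{B\left(\frac{\theta^1-\theta^2}{2},\frac{\theta^1+\theta^2}{2}\right)},\qquad x\in\mathbb{R},\quad (\theta^1,\theta^2)\in\Theta=\{\theta^1\pm\theta^2>0\}.$$ Then $M$ is $\pm1$-flat, i.e. the $\alpha$-curvature tensor vanishes identically for $\alpha=1$ and $\alpha=-1$. Moreover, writing $a=\frac{\theta^1-\theta^2}{2}$, $b=\frac{\theta^1+\theta^2}{2}$, $p=\psi'(a)$, $q=\psi'(b)$, $r=\psi'(\theta^1)$, $s=\psi''(a)$, $u=\psi''(b)$, $v=\psi''(\theta^1)$, for $\alpha=0$ the quantity $K=R^{(0)}_{1212}/\det G$ equals $$K=\frac{u(sr-vp)-vsq}{4\big(rp+(r-p)q\big)^2}.$$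
   Context: $B$ is the beta function, $\psi=\Gamma'/\Gamma$ the digamma function, $\psi',\psi''$ its derivatives. With $l=\ln p$, $\partial_i=\partial/\partial\theta^i$: the Fisher metric is $g_{ij}=\mathbb{E}[\partial_il\,\partial_jl]$, $G=(g_{ij})$, $(g^{ij})=G^{-1}$, $T_{ijk}=\mathbb{E}[\partial_il\,\partial_jl\,\partial_kl]$, $\Gamma_{ijk}=\frac12(\partial_ig_{jk}+\partial_jg_{ki}-\partial_kg_{ij})$, the $\alpha$-connection $\nabla^{(\alpha)}$ has coefficients $\Gamma^{(\alpha)}_{ijk}=\Gamma_{ijk}-\frac{\alpha}{2}T_{ijk}$ and $\Gamma^{(\alpha)k}_{ij}=\Gamma^{(\alpha)}_{ijs}g^{sk}$, $\nabla^{(\alpha)}_{\partial_i}\partial_j=\Gamma^{(\alpha)k}_{ij}\partial_k$. The $\alpha$-curvature tensor is $R^{(\alpha)}_{ijkl}=g\big(R^{(\alpha)}(\partial_i,\partial_j)\partial_k,\partial_l\big)$ with $R^{(\alpha)}(X,Y)=\nabla^{(\alpha)}_X\nabla^{(\alpha)}_Y-\nabla^{(\alpha)}_Y\nabla^{(\alpha)}_X-\nabla^{(\alpha)}_{[X,Y]}$. The case $\alpha=0$ is the Levi-Civita connection of the Fisher metric. *)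

theory Defs
  imports "HOL-Analysis.Analysis"
begin

text \<open>Parameters theta = (theta1, theta2) :: real \<times> real; coordinate indices are 1 and 2.\<close>

definition sech :: "real \<Rightarrow> real" where
  "sech x = 1 / cosh x"

definition Theta :: "(real \<times> real) set" where
  "Theta = {th. fst th - snd th > 0 \<and> fst th + snd th > 0}"

definition blpdf :: "real \<times> real \<Rightarrow> real \<Rightarrow> real" where
  "blpdf th x = (2 powr (1 - fst th) * sech x powr (fst th) * exp (snd th * x)) /
      Beta ((fst th - snd th) / 2) ((fst th + snd th) / 2)"

definition loglik :: "real \<times> real \<Rightarrow> real \<Rightarrow> real" where
  "loglik th x = ln (blpdf th x)"

definition cdir :: "nat \<Rightarrow> real \<times> real" where
  "cdir i = (if i = 1 then (1, 0) else (0, 1))"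

definition pd :: "nat \<Rightarrow> (real \<times> real \<Rightarrow> real) \<Rightarrow> real \<times> real \<Rightarrow> real" where
  "pd i f th = deriv (\<lambda>t. f (th + t *\<^sub>R cdir i)) 0"

definition Ex :: "real \<times> real \<Rightarrow> (real \<Rightarrow> real) \<Rightarrow> real" where
  "Ex th f = (LINT x|lborel. blpdf th x * f x)"

definition score :: "nat \<Rightarrow> real \<times> real \<Rightarrow> real \<Rightarrow> real" where
  "score i th x = pd i (\<lambda>eta. loglik eta x) th"

definition fisher :: "nat \<Rightarrow> nat \<Rightarrow> real \<times> real \<Rightarrow> real" where
  "fisher i j th = Ex th (\<lambda>x. score i th x * score j th x)"

definition skewT :: "nat \<Rightarrow> nat \<Rightarrow> nat \<Rightarrow> real \<times> real \<Rightarrow> real" where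
  "skewT i j k th = Ex th (\<lambda>x. score i th x * score j th x * score k th x)"

definition detG :: "real \<times> real \<Rightarrow> real" where
  "detG th = fisher 1 1 th * fisher 2 2 th - fisher 1 2 th * fisher 2 1 th"

definition fisher_inv :: "nat \<Rightarrow> nat \<Rightarrow> real \<times> real \<Rightarrow> real" where
  "fisher_inv i j th =
     (if i = 1 \<and> j = 1 then fisher 2 2 th
      else if i = 2 \<and> j = 2 then fisher 1 1 th
      else - fisher i j th) / detG th"

definition christoffel :: "nat \<Rightarrow> nat \<Rightarrow> nat \<Rightarrow> real \<times> real \<Rightarrow> real" where
  "christoffel i j k th =
     (pd i (fisher j k) th + pd j (fisher k i) th - pd k (fisher i j) th) / 2"

definition alpha_conn_low :: "real \<Rightarrow> nat \<Rightarrow> nat \<Rightarrow> nat \<Rightarrow> real \<times> real \<Rightarrow> real" where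
  "alpha_conn_low \<alpha> i j k th = christoffel i j k th - \<alpha> / 2 * skewT i j k th"

definition alpha_conn :: "real \<Rightarrow> nat \<Rightarrow> nat \<Rightarrow> nat \<Rightarrow> real \<times> real \<Rightarrow> real" where
  "alpha_conn \<alpha> i j k th = (\<Sum>s\<in>{1,2}. alpha_conn_low \<alpha> i j s th * fisher_inv s k th)"

text \<open>R(d_i,d_j) d_k = sum_n c_n d_n with [d_i,d_j] = 0 for coordinate fields:
  c_n = d_i Gamma^n_jk - d_j Gamma^n_ik + sum_m (Gamma^m_jk Gamma^n_im - Gamma^m_ik Gamma^n_jm);
  R_ijkl = g(R(d_i,d_j) d_k, d_l) = sum_n c_n g_nl.\<close>
definition alpha_curv :: "real \<Rightarrow> nat \<Rightarrow> nat \<Rightarrow> nat \<Rightarrow> nat \<Rightarrow> real \<times> real \<Rightarrow> real" where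
  "alpha_curv \<alpha> i j k l th =
     (\<Sum>n\<in>{1,2}.
        (pd i (alpha_conn \<alpha> j k n) th - pd j (alpha_conn \<alpha> i k n) th
         + (\<Sum>m\<in>{1,2}. alpha_conn \<alpha> j k m th * alpha_conn \<alpha> i m n th
                        - alpha_conn \<alpha> i k m th * alpha_conn \<alpha> j m n th))
        * fisher n l th)"

end

theory Submission
  imports Defs "HOL-Real_Asymp.Real_Asymp"
begin

lemma sech_pos: "sech x > 0" unfolding sech_def by simp

lemma ln_sech_g:
  assumes t: "0 < t" "t < 1"
  shows "ln (sech ((ln t - ln (1 - t)) / 2)) = ln 2 + ln t / 2 + ln (1 - t) / 2"
proof -
  define A where "A = exp (ln t / 2)"
  define B where "B = exp (ln (1 - t) / 2)"
  have A2: "A * A = t" unfolding A_def using t by (simp flip: exp_add)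
  have B2: "B * B = 1 - t" unfolding B_def using t by (simp flip: exp_add)
  have Ap: "A > 0" "B > 0" unfolding A_def B_def by auto
  have e1: "exp ((ln t - ln (1 - t)) / 2) = A / B"
    unfolding A_def B_def by (simp add: diff_divide_distrib exp_diff)
  have e2: "exp (- ((ln t - ln (1 - t)) / 2)) = B / A"
    unfolding A_def B_def by (simp add: diff_divide_distrib exp_diff)
  have "cosh ((ln t - ln (1 - t)) / 2) = (A / B + B / A) / 2"
    by (simp add: cosh_field_def e1 e2)
  also have "\<dots> = (A * A + B * B) / (2 * A * B)" using Ap by (simp add: field_simps)
  also have "\<dots> = 1 / (2 * A * B)" using A2 B2 by simp
  finally have "sech ((ln t - ln (1 - t)) / 2) = 2 * A * B" unfolding sech_def by simp
  then show ?thesis using Ap by (simp add: ln_mult A_def B_def)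
qed

lemma lim_g1: "filterlim (\<lambda>t::real. (ln t - ln (1 - t)) / 2) at_bot (at_right 0)"
  by real_asymp
lemma lim_g2: "filterlim (\<lambda>t::real. (ln t - ln (1 - t)) / 2) at_top (at_left 1)"
  by real_asymp

lemma h_g:
  assumes t: "0 < t" "t < 1"
  shows "2 powr (1 - c) * sech ((ln t - ln (1 - t)) / 2) powr c * exp (d * ((ln t - ln (1 - t)) / 2))
        * (1 / (2 * t * (1 - t))) = t powr ((c + d) / 2 - 1) * (1 - t) powr ((c - d) / 2 - 1)"
proof -
  have e1: "1 / (2 * t * (1 - t)) = exp (- ln 2 - ln t - ln (1 - t))"
    using t by (simp add: exp_diff exp_minus)
  have e2: "sech ((ln t - ln (1 - t)) / 2) powr c = exp (c * (ln 2 + ln t / 2 + ln (1 - t) / 2))"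
    using sech_pos[of "(ln t - ln (1 - t)) / 2"] by (simp add: powr_def ln_sech_g[OF t])
  have e3: "(2::real) powr (1 - c) = exp ((1 - c) * ln 2)" by (simp add: powr_def)
  have e4: "t powr ((c + d) / 2 - 1) * (1 - t) powr ((c - d) / 2 - 1)
      = exp (((c + d) / 2 - 1) * ln t + ((c - d) / 2 - 1) * ln (1 - t))"
    using t by (simp add: powr_def exp_add)
  show ?thesis unfolding e1 e2 e3 e4 exp_add[symmetric]
    by (rule arg_cong[where f = exp]) (simp add: field_simps)
qed

lemma norm_int:
  fixes c d :: real
  assumes cd: "c - d > 0" "c + d > 0"
  defines "h \<equiv> (\<lambda>x. 2 powr (1 - c) * sech x powr c * exp (d * x))"
  shows "integrable lborel h" "(\<integral>x. h x \<partial>lborel) = Beta ((c - d) / 2) ((c + d) / 2)"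
proof -
  define g where "g = (\<lambda>t::real. (ln t - ln (1 - t)) / 2)"
  define g' where "g' = (\<lambda>t::real. 1 / (2 * t * (1 - t)))"
  have hg: "h (g t) * g' t = t powr ((c + d) / 2 - 1) * (1 - t) powr ((c - d) / 2 - 1)"
    if "0 < t" "t < 1" for t
    using h_g[OF that, of c d] unfolding h_def g_def g'_def by simp
  have deriv: "DERIV g t :> g' t" if "0 < ereal t" "ereal t < 1" for t
  proof -
    from that have t: "0 < t" "t < 1" by auto
    show ?thesis unfolding g_def g'_def
      using t by (auto intro!: derivative_eq_intros simp: field_simps)
  qed
  have cont_h: "isCont h y" for y
    using sech_pos unfolding h_def sech_def by (auto intro!: continuous_intros)
  have cont_g': "isCont g' t" if "0 < ereal t" "ereal t < 1" for t
    using that unfolding g'_def by (auto intro!: continuous_intros)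
  have h_nn: "0 \<le> h y" for y unfolding h_def by simp
  have g'_nn: "0 \<le> g' t" if "0 \<le> ereal t" "ereal t \<le> 1" for t
    using that unfolding g'_def by auto
  have A: "((ereal \<circ> g \<circ> real_of_ereal) \<longlongrightarrow> -\<infinity>) (at_right 0)"
    unfolding zero_ereal_def ereal_tendsto_simps g_def by (rule lim_g1)
  have B: "((ereal \<circ> g \<circ> real_of_ereal) \<longlongrightarrow> \<infinity>) (at_left 1)"
    unfolding one_ereal_def ereal_tendsto_simps g_def by (rule lim_g2)
  have ib: "set_integrable lborel {0..1} (\<lambda>t. t powr ((c + d) / 2 - 1) * (1 - t) powr ((c - d) / 2 - 1))"
    by (rule integrable_Beta) (use cd in auto)
  have ib2: "set_integrable lborel (einterval 0 1) (\<lambda>t. h (g t) * g' t)"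
  proof -
    have "set_integrable lborel (einterval 0 1) (\<lambda>t. t powr ((c + d) / 2 - 1) * (1 - t) powr ((c - d) / 2 - 1))"
      by (rule set_integrable_subset[OF ib]) (auto simp: einterval_def)
    then show ?thesis
      by (rule set_integrable_cong[THEN iffD1, rotated -1]) (auto simp: einterval_def hg)
  qed
  note S = interval_integral_substitution_nonneg[of 0 1 g g' h, OF _ deriv _ cont_g' _ g'_nn A B ib2]
  have i1: "set_integrable lborel (einterval (-\<infinity>) \<infinity>) h" and
    e1: "(LBINT x=-\<infinity>..\<infinity>. h x) = (LBINT x=0..1. h (g x) * g' x)"
    using S cont_h h_nn by auto
  have ev: "einterval (-\<infinity>) \<infinity> = UNIV" by (auto simp: einterval_def)
  from i1 show "integrable lborel h" by (simp add: ev set_integrable_def)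
  have "(\<integral>x. h x \<partial>lborel) = (LBINT x=-\<infinity>..\<infinity>. h x)"
    by (simp add: interval_lebesgue_integral_def ev set_lebesgue_integral_def)
  also have "\<dots> = (LBINT x=0..1. h (g x) * g' x)" by (rule e1)
  also have "\<dots> = (LBINT x=0..1. x powr ((c + d) / 2 - 1) * (1 - x) powr ((c - d) / 2 - 1))"
    by (auto simp: interval_lebesgue_integral_def zero_ereal_def one_ereal_def einterval_def hg
        intro!: set_lebesgue_integral_cong)
  also have "\<dots> = (LBINT x:{0..1}. x powr ((c + d) / 2 - 1) * (1 - x) powr ((c - d) / 2 - 1))"
    using interval_integral_Icc[of 0 1 "\<lambda>x. x powr ((c + d) / 2 - 1) * (1 - x) powr ((c - d) / 2 - 1)"]
    by (simp add: zero_ereal_def one_ereal_def)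
  also have "\<dots> = integral {0..1} (\<lambda>x. x powr ((c + d) / 2 - 1) * (1 - x) powr ((c - d) / 2 - 1))"
    by (rule set_borel_integral_eq_integral[OF ib])
  also have "\<dots> = Beta ((c + d) / 2) ((c - d) / 2)"
    using has_integral_Beta_real[of "(c + d) / 2" "(c - d) / 2"] cd by (auto dest: integral_unique)
  finally show "(\<integral>x. h x \<partial>lborel) = Beta ((c - d) / 2) ((c + d) / 2)"
    by (simp add: Beta_commute)
qed

lemma quot_bound:
  fixes f f' :: "real \<Rightarrow> real"
  assumes "y \<in> {c<..<d}" "t0 \<in> {c<..<d}" "y \<noteq> t0"
    and der: "\<And>t. t \<in> {c<..<d} \<Longrightarrow> (f has_real_derivative f' t) (at t)"
    and bd: "\<And>t. t \<in> {c<..<d} \<Longrightarrow> \<bar>f' t\<bar> \<le> B"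
  shows "\<bar>(f y - f t0) / (y - t0)\<bar> \<le> B"
proof (cases "y < t0")
  case True
  from MVT2[OF True, of f f'] assms obtain z where z: "y < z" "z < t0" "f t0 - f y = (t0 - y) * f' z"
    by (metis atLeastAtMost_iff greaterThanLessThan_iff le_less_trans less_le_trans)
  have "(f y - f t0) / (y - t0) = f' z" using z by (simp add: field_simps)
  then show ?thesis using bd[of z] z assms by auto
next
  case False
  then have F: "t0 < y" using assms by auto
  from MVT2[OF F, of f f'] assms obtain z where z: "t0 < z" "z < y" "f y - f t0 = (y - t0) * f' z"
    by (metis atLeastAtMost_iff greaterThanLessThan_iff le_less_trans less_le_trans)
  have "(f y - f t0) / (y - t0) = f' z" using z by (simp add: field_simps)
  then show ?thesis using bd[of z] z assms by auto
qed

lemma DERIV_integral_dom: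
  fixes F F' :: "real \<Rightarrow> 'a \<Rightarrow> real"
  assumes t0: "t0 \<in> {c<..<d}"
    and int: "\<And>t. t \<in> {c<..<d} \<Longrightarrow> integrable M (F t)"
    and der: "\<And>x t. t \<in> {c<..<d} \<Longrightarrow> ((\<lambda>t. F t x) has_real_derivative F' t x) (at t)"
    and meas: "F' t0 \<in> borel_measurable M"
    and Gi: "integrable M G"
    and Gb: "\<And>x t. t \<in> {c<..<d} \<Longrightarrow> \<bar>F' t x\<bar> \<le> G x"
  shows "((\<lambda>t. \<integral>x. F t x \<partial>M) has_real_derivative (\<integral>x. F' t0 x \<partial>M)) (at t0)"
proof -
  let ?S = "{c<..<d}"
  have "((\<lambda>t. \<integral>x. F t x \<partial>M) has_real_derivative (\<integral>x. F' t0 x \<partial>M)) (at t0 within ?S)"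
    unfolding has_field_derivative_iff tendsto_at_iff_sequentially comp_def
  proof (intro allI impI)
    fix X :: "nat \<Rightarrow> real"
    assume X: "\<forall>i. X i \<in> ?S - {t0}" and XL: "X \<longlonglongrightarrow> t0"
    define s where "s = (\<lambda>i x. (F (X i) x - F t0 x) / (X i - t0))"
    have eq: "((\<integral>x. F (X i) x \<partial>M) - (\<integral>x. F t0 x \<partial>M)) / (X i - t0) = integral\<^sup>L M (s i)" for i
    proof -
      have i1: "integrable M (F (X i))" "integrable M (F t0)" using X int t0 by auto
      show ?thesis unfolding s_def integral_divide_zero by (simp add: Bochner_Integration.integral_diff[OF i1])
    qed
    have XA: "filterlim X (at t0) sequentially"
      using X XL by (auto simp: filterlim_at)
    have "(\<lambda>i. integral\<^sup>L M (s i)) \<longlonglongrightarrow> integral\<^sup>L M (F' t0)"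
    proof (rule integral_dominated_convergence[where w = G])
      show "F' t0 \<in> borel_measurable M" by (rule meas)
      show "s i \<in> borel_measurable M" for i
        unfolding s_def using X int t0 by (auto intro!: borel_measurable_divide borel_measurable_diff)
      show "integrable M G" by (rule Gi)
      show "AE x in M. (\<lambda>i. s i x) \<longlonglongrightarrow> F' t0 x"
      proof (rule AE_I2)
        fix x
        have "((\<lambda>y. (F y x - F t0 x) / (y - t0)) \<longlongrightarrow> F' t0 x) (at t0)"
          using der[OF t0, of x] by (simp add: has_field_derivative_iff)
        from filterlim_compose[OF this XA] show "(\<lambda>i. s i x) \<longlonglongrightarrow> F' t0 x"
          unfolding s_def by simp
      qed
      show "AE x in M. norm (s i x) \<le> G x" for i
      proof (rule AE_I2)
        fix x
        show "norm (s i x) \<le> G x"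
          unfolding s_def real_norm_def
          by (rule quot_bound[where f' = "\<lambda>t. F' t x"]) (use X t0 der Gb in auto)
      qed
    qed
    then show "(\<lambda>i. ((\<integral>x. F (X i) x \<partial>M) - (\<integral>x. F t0 x \<partial>M)) / (X i - t0)) \<longlonglongrightarrow> (\<integral>x. F' t0 x \<partial>M)"
      by (simp add: eq)
  qed
  then show ?thesis by (simp only: at_within_open[OF t0 open_greaterThanLessThan])
qed

lemma pow_le_exp: "0 \<le> x \<Longrightarrow> x ^ n / fact n \<le> exp (x::real)"
proof -
  assume x: "0 \<le> x"
  have s: "summable (\<lambda>k. x ^ k /\<^sub>R fact k)" using exp_converges[of x] by (rule sums_summable)
  have "x ^ n / fact n = sum (\<lambda>k. x ^ k /\<^sub>R fact k) {n}" by (simp add: divide_inverse_commute)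
  also have "\<dots> \<le> (\<Sum>k. x ^ k /\<^sub>R fact k)"
    by (rule sum_le_suminf[OF s]) (use x in auto)
  also have "\<dots> = exp x" using exp_converges[of x] by (simp add: sums_iff)
  finally show ?thesis .
qed

lemma abs_pow_le_exp:
  fixes y \<delta> :: real
  assumes "\<delta> > 0"
  shows "\<bar>y\<bar> ^ n \<le> (fact n / \<delta> ^ n) * (exp (\<delta> * y) + exp (- (\<delta> * y)))"
proof -
  have "(\<delta> * \<bar>y\<bar>) ^ n / fact n \<le> exp (\<delta> * \<bar>y\<bar>)" by (rule pow_le_exp) (use assms in simp)
  also have "\<dots> \<le> exp (\<delta> * y) + exp (- (\<delta> * y))"
    by (cases "y \<ge> 0") (auto simp: abs_if add_increasing add_increasing2)
  finally have "\<delta> ^ n * \<bar>y\<bar> ^ n \<le> fact n * (exp (\<delta> * y) + exp (- (\<delta> * y)))"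
    by (simp add: power_mult_distrib divide_le_eq mult.commute)
  then show ?thesis using assms by (simp add: field_simps)
qed

lemma exp_between:
  fixes y \<delta> s t :: real
  assumes "\<bar>s - t\<bar> \<le> \<delta>"
  shows "exp (s * y) \<le> exp ((t + \<delta>) * y) + exp ((t - \<delta>) * y)"
proof (cases "y \<ge> 0")
  case True
  have "s \<le> t + \<delta>" using assms by (simp add: abs_le_iff)
  then have "s * y \<le> (t + \<delta>) * y" using True by (intro mult_right_mono) auto
  then show ?thesis by (simp add: add_increasing2)
next
  case False
  have "t - \<delta> \<le> s" using assms by (simp add: abs_le_iff)
  then have "(t - \<delta>) * y \<ge> s * y" using False by (intro mult_right_mono_neg) auto
  then show ?thesis by (simp add: add_increasing)
qed

lemma pow_exp_bound:
  fixes y \<delta> s t :: real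
  assumes "\<delta> > 0" "\<bar>s - t\<bar> \<le> \<delta>"
  shows "\<bar>y ^ n * exp (s * y)\<bar> \<le> (fact n / \<delta> ^ n) *
     (exp ((t + 2 * \<delta>) * y) + 2 * exp (t * y) + exp ((t - 2 * \<delta>) * y))"
proof -
  have "\<bar>y ^ n * exp (s * y)\<bar> = \<bar>y\<bar> ^ n * exp (s * y)" by (simp add: abs_mult power_abs)
  also have "\<dots> \<le> ((fact n / \<delta> ^ n) * (exp (\<delta> * y) + exp (- (\<delta> * y)))) *
      (exp ((t + \<delta>) * y) + exp ((t - \<delta>) * y))"
  proof (rule mult_mono)
    show "0 \<le> (fact n / \<delta> ^ n) * (exp (\<delta> * y) + exp (- (\<delta> * y)))"
      using assms by (intro mult_nonneg_nonneg add_nonneg_nonneg) auto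
  qed (use assms abs_pow_le_exp exp_between in auto)
  finally have L: "\<bar>y ^ n * exp (s * y)\<bar> \<le> (fact n / \<delta> ^ n) * (exp (\<delta> * y) + exp (- (\<delta> * y))) *
      (exp ((t + \<delta>) * y) + exp ((t - \<delta>) * y))" .
  have eq: "(exp (\<delta> * y) + exp (- (\<delta> * y))) * (exp ((t + \<delta>) * y) + exp ((t - \<delta>) * y))
      = exp ((t + 2 * \<delta>) * y) + 2 * exp (t * y) + exp ((t - 2 * \<delta>) * y)"
    by (simp add: algebra_simps flip: exp_add)
  from L show ?thesis by (simp only: mult.assoc eq)
qed

locale expfam =
  fixes f Y :: "real \<Rightarrow> real" and c d :: real
  assumes fnn: "\<And>x. 0 \<le> f x" and fm[measurable]: "f \<in> borel_measurable lborel"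
    and Ym[measurable]: "Y \<in> borel_measurable lborel"
    and I: "\<And>t. t \<in> {c<..<d} \<Longrightarrow> integrable lborel (\<lambda>x. f x * exp (t * Y x))"
begin

lemma mom_int_aux:
  assumes t: "t \<in> {c<..<d}" and dl: "\<delta> > 0" "t - 2 * \<delta> \<in> {c<..<d}" "t + 2 * \<delta> \<in> {c<..<d}"
    and s: "\<bar>s - t\<bar> \<le> \<delta>"
  shows "integrable lborel (\<lambda>x. f x * Y x ^ n * exp (s * Y x))"
proof (rule Bochner_Integration.integrable_bound)
  show "integrable lborel (\<lambda>x. (fact n / \<delta> ^ n) * (f x * exp ((t + 2 * \<delta>) * Y x) +
      2 * (f x * exp (t * Y x)) + f x * exp ((t - 2 * \<delta>) * Y x)))"
    using I[OF t] I[OF dl(2)] I[OF dl(3)] by auto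
  show "(\<lambda>x. f x * Y x ^ n * exp (s * Y x)) \<in> borel_measurable lborel" by measurable
  show "AE x in lborel. norm (f x * Y x ^ n * exp (s * Y x)) \<le> norm ((fact n / \<delta> ^ n) * (f x * exp ((t + 2 * \<delta>) * Y x) +
      2 * (f x * exp (t * Y x)) + f x * exp ((t - 2 * \<delta>) * Y x)))"
  proof (rule AE_I2)
    fix x
    have "norm (f x * Y x ^ n * exp (s * Y x)) = f x * \<bar>Y x ^ n * exp (s * Y x)\<bar>"
      using fnn[of x] by (simp add: abs_mult)
    also have "\<dots> \<le> f x * ((fact n / \<delta> ^ n) *
       (exp ((t + 2 * \<delta>) * Y x) + 2 * exp (t * Y x) + exp ((t - 2 * \<delta>) * Y x)))"
      by (intro mult_left_mono pow_exp_bound dl s fnn)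
    also have "\<dots> \<le> norm ((fact n / \<delta> ^ n) * (f x * exp ((t + 2 * \<delta>) * Y x) +
      2 * (f x * exp (t * Y x)) + f x * exp ((t - 2 * \<delta>) * Y x)))"
      using fnn[of x] dl by (simp add: algebra_simps)
    finally show "norm (f x * Y x ^ n * exp (s * Y x)) \<le> \<dots>" .
  qed
qed

lemma delta_ex:
  assumes t: "t \<in> {c<..<d}"
  obtains \<delta> where "\<delta> > 0" "t - 2 * \<delta> \<in> {c<..<d}" "t + 2 * \<delta> \<in> {c<..<d}" "{t - \<delta><..<t + \<delta>} \<subseteq> {c<..<d}"
proof
  define \<delta> where "\<delta> = min (t - c) (d - t) / 3"
  show "\<delta> > 0" "t - 2 * \<delta> \<in> {c<..<d}" "t + 2 * \<delta> \<in> {c<..<d}" "{t - \<delta><..<t + \<delta>} \<subseteq> {c<..<d}"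
    using t by (auto simp: \<delta>_def min_def field_simps)
qed

lemma mom_int:
  assumes t: "t \<in> {c<..<d}"
  shows "integrable lborel (\<lambda>x. f x * Y x ^ n * exp (t * Y x))"
proof -
  obtain \<delta> where "\<delta> > 0" "t - 2 * \<delta> \<in> {c<..<d}" "t + 2 * \<delta> \<in> {c<..<d}" using delta_ex[OF t] by blast
  then show ?thesis using mom_int_aux[OF t] by auto
qed

lemma mom_deriv:
  assumes t: "t \<in> {c<..<d}"
  shows "((\<lambda>s. \<integral>x. f x * Y x ^ n * exp (s * Y x) \<partial>lborel) has_real_derivative
           (\<integral>x. f x * Y x ^ Suc n * exp (t * Y x) \<partial>lborel)) (at t)"
proof -
  obtain \<delta> where dl: "\<delta> > 0" "t - 2 * \<delta> \<in> {c<..<d}" "t + 2 * \<delta> \<in> {c<..<d}"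
      and sub: "{t - \<delta><..<t + \<delta>} \<subseteq> {c<..<d}" using delta_ex[OF t] by blast
  define K where "K = fact (Suc n) / \<delta> ^ Suc n"
  show ?thesis
  proof (rule DERIV_integral_dom[where c = "t - \<delta>" and d = "t + \<delta>" and
        G = "\<lambda>x. K * (f x * exp ((t + 2 * \<delta>) * Y x) + 2 * (f x * exp (t * Y x)) + f x * exp ((t - 2 * \<delta>) * Y x))"])
    show "t \<in> {t - \<delta><..<t + \<delta>}" using dl by auto
    show "integrable lborel (\<lambda>x. f x * Y x ^ n * exp (s * Y x))" if "s \<in> {t - \<delta><..<t + \<delta>}" for s
      using sub that by (intro mom_int) auto
    show "((\<lambda>s. f x * Y x ^ n * exp (s * Y x)) has_real_derivative f x * Y x ^ Suc n * exp (s * Y x)) (at s)" for x s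
      by (auto intro!: derivative_eq_intros simp: algebra_simps)
    show "(\<lambda>x. f x * Y x ^ Suc n * exp (t * Y x)) \<in> borel_measurable lborel" by measurable
    show "integrable lborel (\<lambda>x. K * (f x * exp ((t + 2 * \<delta>) * Y x) + 2 * (f x * exp (t * Y x)) + f x * exp ((t - 2 * \<delta>) * Y x)))"
      using I[OF t] I[OF dl(2)] I[OF dl(3)] by auto
    show "\<bar>f x * Y x ^ Suc n * exp (s * Y x)\<bar> \<le> K * (f x * exp ((t + 2 * \<delta>) * Y x) + 2 * (f x * exp (t * Y x)) + f x * exp ((t - 2 * \<delta>) * Y x))"
      if "s \<in> {t - \<delta><..<t + \<delta>}" for x s
    proof -
      have "\<bar>f x * Y x ^ Suc n * exp (s * Y x)\<bar> = f x * \<bar>Y x ^ Suc n * exp (s * Y x)\<bar>"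
        using fnn[of x] by (simp add: abs_mult)
      also have "\<dots> \<le> f x * (K * (exp ((t + 2 * \<delta>) * Y x) + 2 * exp (t * Y x) + exp ((t - 2 * \<delta>) * Y x)))"
        unfolding K_def using that dl by (intro mult_left_mono pow_exp_bound fnn) auto
      finally show ?thesis by (simp add: algebra_simps)
    qed
  qed
qed

end

lemma deriv_eq_on_open:
  fixes f g :: "real \<Rightarrow> real"
  assumes "(f has_real_derivative D) (at t)" "(g has_real_derivative E) (at t)"
    "t \<in> {c<..<d}" "\<And>x. x \<in> {c<..<d} \<Longrightarrow> f x = g x"
  shows "D = E"
proof -
  have "(g has_real_derivative D) (at t)"
    by (rule has_field_derivative_transform_within_open[OF assms(1) _ assms(3)]) (use assms(4) in auto)
  then show ?thesis using assms(2) by (rule DERIV_unique)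
qed

locale expfam_G = expfam +
  fixes G G1 G2 G3 :: "real \<Rightarrow> real"
  assumes mgf: "\<And>t. t \<in> {c<..<d} \<Longrightarrow> (\<integral>x. f x * exp (t * Y x) \<partial>lborel) = exp (G t)"
    and dG: "\<And>t. t \<in> {c<..<d} \<Longrightarrow> (G has_real_derivative G1 t) (at t)"
    and dG1: "\<And>t. t \<in> {c<..<d} \<Longrightarrow> (G1 has_real_derivative G2 t) (at t)"
    and dG2: "\<And>t. t \<in> {c<..<d} \<Longrightarrow> (G2 has_real_derivative G3 t) (at t)"
begin

abbreviation "mm n t \<equiv> (\<integral>x. f x * Y x ^ n * exp (t * Y x) \<partial>lborel)"

lemma m0: "t \<in> {c<..<d} \<Longrightarrow> mm 0 t = exp (G t)"
  using mgf by simp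

lemma m1: "t \<in> {c<..<d} \<Longrightarrow> mm 1 t = G1 t * exp (G t)"
proof -
  assume t: "t \<in> {c<..<d}"
  have "((\<lambda>t. exp (G t)) has_real_derivative exp (G t) * G1 t) (at t)"
    using dG[OF t] by (auto intro!: derivative_eq_intros)
  from deriv_eq_on_open[OF mom_deriv[OF t, of 0] this t] m0 show ?thesis by simp
qed

lemma m2: "t \<in> {c<..<d} \<Longrightarrow> mm 2 t = (G2 t + G1 t ^ 2) * exp (G t)"
proof -
  assume t: "t \<in> {c<..<d}"
  have "((\<lambda>t. G1 t * exp (G t)) has_real_derivative G2 t * exp (G t) + G1 t * (exp (G t) * G1 t)) (at t)"
    using dG[OF t] dG1[OF t] by (auto intro!: derivative_eq_intros)
  from deriv_eq_on_open[OF mom_deriv[OF t, of 1] this t] m1 show ?thesis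
    by (simp add: algebra_simps power2_eq_square numeral_2_eq_2)
qed

lemma m3: "t \<in> {c<..<d} \<Longrightarrow> mm 3 t = (G3 t + 3 * G1 t * G2 t + G1 t ^ 3) * exp (G t)"
proof -
  assume t: "t \<in> {c<..<d}"
  have "((\<lambda>t. (G2 t + G1 t ^ 2) * exp (G t)) has_real_derivative
      (G3 t + 2 * G1 t * G2 t) * exp (G t) + (G2 t + G1 t ^ 2) * (exp (G t) * G1 t)) (at t)"
    using dG[OF t] dG1[OF t] dG2[OF t] by (auto intro!: derivative_eq_intros simp: algebra_simps power2_eq_square)
  from deriv_eq_on_open[OF mom_deriv[OF t, of 2] this t] m2 show ?thesis
    by (simp add: algebra_simps power2_eq_square power3_eq_cube numeral_3_eq_3 numeral_2_eq_2)
qed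

lemma central:
  assumes 0: "0 \<in> {c<..<d}" "G 0 = 0"
  shows "integrable lborel (\<lambda>x. f x * (Y x - G1 0) ^ 2)"
    "(\<integral>x. f x * (Y x - G1 0) ^ 2 \<partial>lborel) = G2 0"
    "integrable lborel (\<lambda>x. f x * (Y x - G1 0) ^ 3)"
    "(\<integral>x. f x * (Y x - G1 0) ^ 3 \<partial>lborel) = G3 0"
proof -
  have i: "integrable lborel (\<lambda>x. f x * Y x ^ n)" for n using mom_int[OF 0(1), of n] by simp
  have e: "(\<integral>x. f x * Y x ^ n \<partial>lborel) = mm n 0" for n by simp
  have e0: "(\<integral>x. f x \<partial>lborel) = 1" using m0[OF 0(1)] 0 by simp
  have e1: "(\<integral>x. f x * Y x \<partial>lborel) = G1 0" using m1[OF 0(1)] 0 by simp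
  have e2: "(\<integral>x. f x * Y x ^ 2 \<partial>lborel) = G2 0 + G1 0 ^ 2" using m2[OF 0(1)] 0 by simp
  have e3: "(\<integral>x. f x * Y x ^ 3 \<partial>lborel) = G3 0 + 3 * G1 0 * G2 0 + G1 0 ^ 3" using m3[OF 0(1)] 0 by simp
  have i0: "integrable lborel f" using i[of 0] by simp
  have i1: "integrable lborel (\<lambda>x. f x * Y x)" using i[of 1] by simp
  have i2: "integrable lborel (\<lambda>x. f x * Y x ^ 2)" using i[of 2] by simp
  have i3: "integrable lborel (\<lambda>x. f x * Y x ^ 3)" using i[of 3] by simp
  let ?m = "G1 0"
  have p2: "f x * (Y x - ?m) ^ 2 = f x * Y x ^ 2 - 2 * ?m * (f x * Y x) + ?m ^ 2 * f x" for x
    by (simp add: algebra_simps power2_eq_square)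
  have p3: "f x * (Y x - ?m) ^ 3 = f x * Y x ^ 3 - 3 * ?m * (f x * Y x ^ 2) + 3 * ?m ^ 2 * (f x * Y x) - ?m ^ 3 * f x" for x
    by (simp add: algebra_simps power2_eq_square power3_eq_cube)
  show "integrable lborel (\<lambda>x. f x * (Y x - G1 0) ^ 2)" unfolding p2 using i0 i1 i2 by auto
  show "integrable lborel (\<lambda>x. f x * (Y x - G1 0) ^ 3)" unfolding p3 using i0 i1 i2 i3 by auto
  have I2: "integrable lborel (\<lambda>x. 2 * ?m * (f x * Y x))" "integrable lborel (\<lambda>x. ?m ^ 2 * f x)"
    "integrable lborel (\<lambda>x. 3 * ?m * (f x * Y x ^ 2))" "integrable lborel (\<lambda>x. 3 * ?m ^ 2 * (f x * Y x))"
    "integrable lborel (\<lambda>x. ?m ^ 3 * f x)"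
    using i0 i1 i2 by auto
  have "(\<integral>x. f x * (Y x - G1 0) ^ 2 \<partial>lborel) = (G2 0 + G1 0 ^ 2) - 2 * ?m * G1 0 + ?m ^ 2 * 1"
    unfolding p2 using i0 i1 i2 I2
    by (simp add: Bochner_Integration.integral_add Bochner_Integration.integral_diff e0 e1 e2 del: integral_mult_right integral_mult_left)
  then show "(\<integral>x. f x * (Y x - G1 0) ^ 2 \<partial>lborel) = G2 0" by (simp add: power2_eq_square)
  have "(\<integral>x. f x * (Y x - G1 0) ^ 3 \<partial>lborel) = (G3 0 + 3 * G1 0 * G2 0 + G1 0 ^ 3)
       - 3 * ?m * (G2 0 + G1 0 ^ 2) + 3 * ?m ^ 2 * G1 0 - ?m ^ 3 * 1"
    unfolding p3 using i0 i1 i2 i3 I2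
    by (simp add: Bochner_Integration.integral_add Bochner_Integration.integral_diff e0 e1 e2 e3 del: integral_mult_right integral_mult_left)
  then show "(\<integral>x. f x * (Y x - G1 0) ^ 3 \<partial>lborel) = G3 0"
    by (simp add: power2_eq_square power3_eq_cube algebra_simps)
qed

end

definition ca :: "nat \<Rightarrow> real" where "ca i = (if i = 1 then 1/2 else -1/2)"
definition cc :: "nat \<Rightarrow> real" where "cc i = (if i = 1 then 1 else 0)"
definition aa :: "real \<times> real \<Rightarrow> real" where "aa th = (fst th - snd th) / 2"
definition bb :: "real \<times> real \<Rightarrow> real" where "bb th = (fst th + snd th) / 2"
definition Tst :: "nat \<Rightarrow> real \<Rightarrow> real" where "Tst i x = (if i = 1 then ln (sech x) - ln 2 else x)"
definition Fpot :: "real \<times> real \<Rightarrow> real" where "Fpot th = ln (Beta (aa th) (bb th)) - ln 2"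
definition D1 :: "nat \<Rightarrow> real \<times> real \<Rightarrow> real" where
  "D1 i th = ca i * Digamma (aa th) + 1/2 * Digamma (bb th) - cc i * Digamma (fst th)"

lemma aa_line[simp]: "aa (th + t *\<^sub>R v) = aa th + t * aa v" by (simp add: aa_def algebra_simps diff_divide_distrib add_divide_distrib)
lemma bb_line[simp]: "bb (th + t *\<^sub>R v) = bb th + t * bb v" by (simp add: bb_def algebra_simps add_divide_distrib)
lemma aa_cdir[simp]: "aa (cdir i) = ca i" by (simp add: aa_def cdir_def ca_def)
lemma bb_cdir[simp]: "bb (cdir i) = 1/2" by (simp add: bb_def cdir_def)
lemma fst_cdir[simp]: "fst (cdir i) = cc i" by (simp add: cdir_def cc_def)
lemma snd_cdir[simp]: "snd (cdir i) = 1 - cc i" by (simp add: cdir_def cc_def)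
lemma fst_aa_bb: "fst th = aa th + bb th" by (simp add: aa_def bb_def field_simps)

lemma Theta_iff: "th \<in> Theta \<longleftrightarrow> aa th > 0 \<and> bb th > 0"
  by (simp add: Theta_def aa_def bb_def)

lemma open_Theta: "open Theta"
  unfolding Theta_def by (intro open_Collect_conj open_Collect_less continuous_intros)

lemma Beta_pos: "a > 0 \<Longrightarrow> b > 0 \<Longrightarrow> Beta a b > (0::real)"
  by (simp add: Beta_def)

lemma ln_Beta:
  fixes a b :: real
  assumes "a > 0" "b > 0"
  shows "ln (Beta a b) = ln_Gamma a + ln_Gamma b - ln_Gamma (a + b)"
proof -
  have g: "Gamma a > 0" "Gamma b > 0" "Gamma (a + b) > 0" using assms by simp_all
  have "ln (Beta a b) = ln (Gamma a) + ln (Gamma b) - ln (Gamma (a + b))"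
    using g by (simp add: Beta_def ln_div ln_mult)
  also have "\<dots> = ln_Gamma a + ln_Gamma b - ln_Gamma (a + b)"
    using assms by (simp add: ln_Gamma_real_pos)
  finally show ?thesis .
qed

lemma Fpot_alt: "th \<in> Theta \<Longrightarrow> Fpot th = ln_Gamma (aa th) + ln_Gamma (bb th) - ln_Gamma (fst th) - ln 2"
  by (simp add: Fpot_def Theta_iff ln_Beta fst_aa_bb)

lemma blpdf_exp:
  assumes "th \<in> Theta"
  shows "blpdf th x = exp (fst th * Tst 1 x + snd th * x - Fpot th)"
proof -
  have B: "Beta (aa th) (bb th) > 0" using assms by (simp add: Theta_iff Beta_pos)
  have "blpdf th x = exp ((1 - fst th) * ln 2) * exp (fst th * ln (sech x)) * exp (snd th * x) /
      exp (ln (Beta (aa th) (bb th)))"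
    using B sech_pos[of x] by (simp add: blpdf_def powr_def aa_def bb_def)
  also have "\<dots> = exp (fst th * Tst 1 x + snd th * x - Fpot th)"
    by (simp add: Tst_def Fpot_def algebra_simps flip: exp_add exp_diff)
  finally show ?thesis .
qed

lemma blpdf_pos: "th \<in> Theta \<Longrightarrow> blpdf th x > 0" by (simp add: blpdf_exp)

lemma blpdf_cont: "continuous_on UNIV (blpdf th)"
  unfolding blpdf_def sech_def divide_inverse[of _ "Beta _ _"] by (auto intro!: continuous_intros)

lemma blpdf_meas[measurable]: "blpdf th \<in> borel_measurable lborel"
  using borel_measurable_continuous_onI[OF blpdf_cont] by simp

lemma blpdf_norm:
  assumes "th \<in> Theta"
  shows "integrable lborel (blpdf th)" "(\<integral>x. blpdf th x \<partial>lborel) = 1"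
proof -
  have cd: "fst th - snd th > 0" "fst th + snd th > 0" using assms by (auto simp: Theta_def)
  have e: "blpdf th = (\<lambda>x. (2 powr (1 - fst th) * sech x powr fst th * exp (snd th * x)) /
      Beta ((fst th - snd th) / 2) ((fst th + snd th) / 2))"
    by (simp add: blpdf_def fun_eq_iff)
  have B: "Beta ((fst th - snd th) / 2) ((fst th + snd th) / 2) > 0" using cd by (simp add: Beta_pos)
  show "integrable lborel (blpdf th)" unfolding e using norm_int(1)[OF cd] by simp
  show "(\<integral>x. blpdf th x \<partial>lborel) = 1" unfolding e using norm_int(2)[OF cd] B by simp
qed

lemma loglik_eq: "th \<in> Theta \<Longrightarrow> loglik th x = fst th * Tst 1 x + snd th * x - Fpot th"
  by (simp add: loglik_def blpdf_exp)

lemma line_open: "open {t::real. th + t *\<^sub>R v \<in> Theta}"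
proof -
  have "open ((\<lambda>t::real. th + t *\<^sub>R v) -` Theta)"
    by (rule continuous_open_vimage[OF open_Theta]) (auto intro!: continuous_intros)
  then show ?thesis by (simp add: vimage_def)
qed

lemma pd_local:
  assumes th: "th \<in> Theta" and eq: "\<And>eta. eta \<in> Theta \<Longrightarrow> f eta = g eta"
    and d: "((\<lambda>t. g (th + t *\<^sub>R cdir i)) has_real_derivative D) (at 0)"
  shows "pd i f th = D"
proof -
  have "((\<lambda>t. f (th + t *\<^sub>R cdir i)) has_real_derivative D) (at 0)"
    by (rule has_field_derivative_transform_within_open[OF d line_open[of th "cdir i"]])
       (use th eq in auto)
  then show ?thesis unfolding pd_def by (rule DERIV_imp_deriv)
qed

lemma Fpot_deriv:
  assumes "th + t *\<^sub>R v \<in> Theta"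
  shows "((\<lambda>s. Fpot (th + s *\<^sub>R v)) has_real_derivative
     aa v * Digamma (aa th + t * aa v) + bb v * Digamma (bb th + t * bb v) - fst v * Digamma (fst th + t * fst v)) (at t)"
proof -
  let ?g = "\<lambda>s. ln_Gamma (aa th + s * aa v) + ln_Gamma (bb th + s * bb v) - ln_Gamma (fst th + s * fst v) - ln 2"
  have pos: "aa th + t * aa v > 0" "bb th + t * bb v > 0" using assms by (auto simp: Theta_iff)
  have pos2: "fst th + t * fst v > 0" using pos fst_aa_bb[of th] fst_aa_bb[of v] by (simp add: algebra_simps)
  have "(?g has_real_derivative
     Digamma (aa th + t * aa v) * aa v + Digamma (bb th + t * bb v) * bb v - Digamma (fst th + t * fst v) * fst v) (at t)"
    using pos pos2 by (auto intro!: derivative_eq_intros)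
  then have "(?g has_real_derivative
     aa v * Digamma (aa th + t * aa v) + bb v * Digamma (bb th + t * bb v) - fst v * Digamma (fst th + t * fst v)) (at t)"
    by (simp add: mult.commute)
  then show ?thesis
    by (rule has_field_derivative_transform_within_open[OF _ line_open[of th v] ])
       (use assms in \<open>auto simp: Fpot_alt\<close>)
qed

lemma score_eq:
  assumes th: "th \<in> Theta"
  shows "score i th x = Tst i x - D1 i th"
proof -
  have "pd i (\<lambda>eta. loglik eta x) th = Tst i x - D1 i th"
  proof (rule pd_local[OF th])
    show "loglik eta x = fst eta * Tst 1 x + snd eta * x - Fpot eta" if "eta \<in> Theta" for eta
      using that by (rule loglik_eq)
    have F: "((\<lambda>t. Fpot (th + t *\<^sub>R cdir i)) has_real_derivative D1 i th) (at 0)"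
      using Fpot_deriv[of th 0 "cdir i"] th by (simp add: D1_def)
    have "((\<lambda>t. fst (th + t *\<^sub>R cdir i) * Tst 1 x + snd (th + t *\<^sub>R cdir i) * x - Fpot (th + t *\<^sub>R cdir i))
       has_real_derivative cc i * Tst 1 x + (1 - cc i) * x - D1 i th) (at 0)"
      by (auto intro!: derivative_eq_intros F)
    moreover have "cc i * Tst 1 x + (1 - cc i) * x - D1 i th = Tst i x - D1 i th"
      by (simp add: cc_def Tst_def)
    ultimately show "((\<lambda>t. fst (th + t *\<^sub>R cdir i) * Tst 1 x + snd (th + t *\<^sub>R cdir i) * x - Fpot (th + t *\<^sub>R cdir i))
       has_real_derivative Tst i x - D1 i th) (at 0)"
      by (simp only:)
  qed
  then show ?thesis by (simp add: score_def)
qed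

lemma nonpos_pos: "(x::real) > 0 \<Longrightarrow> x \<notin> \<int>\<^sub>\<le>\<^sub>0"
  by (auto elim!: nonpos_Ints_cases)

lemma dir_mom:
  fixes v :: "real \<times> real"
  assumes th: "th \<in> Theta"
  defines "s \<equiv> (\<lambda>x. fst v * score 1 th x + snd v * score 2 th x)"
  shows "integrable lborel (\<lambda>x. blpdf th x * s x ^ 2)"
    "(\<integral>x. blpdf th x * s x ^ 2 \<partial>lborel) =
       aa v ^ 2 * Polygamma 1 (aa th) + bb v ^ 2 * Polygamma 1 (bb th) - fst v ^ 2 * Polygamma 1 (fst th)"
    "integrable lborel (\<lambda>x. blpdf th x * s x ^ 3)"
    "(\<integral>x. blpdf th x * s x ^ 3 \<partial>lborel) =
       aa v ^ 3 * Polygamma 2 (aa th) + bb v ^ 3 * Polygamma 2 (bb th) - fst v ^ 3 * Polygamma 2 (fst th)"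
proof -
  define Y where "Y = (\<lambda>x. fst v * Tst 1 x + snd v * x)"
  define \<epsilon> where "\<epsilon> = min (aa th) (bb th) / (1 + \<bar>aa v\<bar> + \<bar>bb v\<bar>)"
  define G where "G = (\<lambda>t. Fpot (th + t *\<^sub>R v) - Fpot th)"
  define G1 where "G1 = (\<lambda>t. aa v * Digamma (aa th + t * aa v) + bb v * Digamma (bb th + t * bb v) - fst v * Digamma (fst th + t * fst v))"
  define G2 where "G2 = (\<lambda>t. aa v ^ 2 * Polygamma 1 (aa th + t * aa v) + bb v ^ 2 * Polygamma 1 (bb th + t * bb v) - fst v ^ 2 * Polygamma 1 (fst th + t * fst v))"
  define G3 where "G3 = (\<lambda>t. aa v ^ 3 * Polygamma 2 (aa th + t * aa v) + bb v ^ 3 * Polygamma 2 (bb th + t * bb v) - fst v ^ 3 * Polygamma 2 (fst th + t * fst v))"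
  have ab: "aa th > 0" "bb th > 0" using th by (auto simp: Theta_iff)
  have epos: "\<epsilon> > 0" unfolding \<epsilon>_def using ab by auto
  have inT: "th + t *\<^sub>R v \<in> Theta" if "t \<in> {-\<epsilon><..<\<epsilon>}" for t
  proof -
    have D: "1 + \<bar>aa v\<bar> + \<bar>bb v\<bar> > 0" by simp
    have "\<bar>t\<bar> < \<epsilon>" using that by auto
    then have tb: "\<bar>t\<bar> * (1 + \<bar>aa v\<bar> + \<bar>bb v\<bar>) < min (aa th) (bb th)"
      unfolding \<epsilon>_def using D by (simp add: less_divide_eq)
    have "\<bar>t * aa v\<bar> \<le> \<bar>t\<bar> * (1 + \<bar>aa v\<bar> + \<bar>bb v\<bar>)" "\<bar>t * bb v\<bar> \<le> \<bar>t\<bar> * (1 + \<bar>aa v\<bar> + \<bar>bb v\<bar>)"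
      by (auto simp: abs_mult intro!: mult_left_mono)
    then have "aa th + t * aa v > 0" "bb th + t * bb v > 0" using tb by (auto simp: abs_le_iff)
    then show ?thesis by (simp add: Theta_iff)
  qed
  have pos3: "aa th + t * aa v > 0" "bb th + t * bb v > 0" "fst th + t * fst v > 0" if "t \<in> {-\<epsilon><..<\<epsilon>}" for t
    using inT[OF that] fst_aa_bb[of th] fst_aa_bb[of v] by (auto simp: Theta_iff algebra_simps)
  have key: "blpdf th x * exp (t * Y x) = exp (G t) * blpdf (th + t *\<^sub>R v) x" if "t \<in> {-\<epsilon><..<\<epsilon>}" for t x
    using inT[OF that] th
    by (simp add: blpdf_exp G_def Y_def algebra_simps flip: exp_add)
  interpret expfam_G "blpdf th" Y "-\<epsilon>" \<epsilon> G G1 G2 G3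
  proof
    show "0 \<le> blpdf th x" for x using blpdf_pos[OF th] less_imp_le by blast
    show "blpdf th \<in> borel_measurable lborel" by simp
    show "Y \<in> borel_measurable lborel"
    proof -
      have "continuous_on UNIV Y" unfolding Y_def Tst_def sech_def by (auto intro!: continuous_intros)
      then show ?thesis using borel_measurable_continuous_onI by simp
    qed
    show "integrable lborel (\<lambda>x. blpdf th x * exp (t * Y x))" if "t \<in> {-\<epsilon><..<\<epsilon>}" for t
      unfolding key[OF that] using blpdf_norm(1)[OF inT[OF that]] by simp
    show "(\<integral>x. blpdf th x * exp (t * Y x) \<partial>lborel) = exp (G t)" if "t \<in> {-\<epsilon><..<\<epsilon>}" for t
      unfolding key[OF that] using blpdf_norm(2)[OF inT[OF that]] by simp
    show "(G has_real_derivative G1 t) (at t)" if "t \<in> {-\<epsilon><..<\<epsilon>}" for t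
      unfolding G_def G1_def using Fpot_deriv[OF inT[OF that]] by (auto intro!: derivative_eq_intros)
    show "(G1 has_real_derivative G2 t) (at t)" if "t \<in> {-\<epsilon><..<\<epsilon>}" for t
      unfolding G1_def G2_def using pos3[OF that]
      by (auto intro!: derivative_eq_intros simp: nonpos_pos power2_eq_square)
    show "(G2 has_real_derivative G3 t) (at t)" if "t \<in> {-\<epsilon><..<\<epsilon>}" for t
      unfolding G2_def G3_def using pos3[OF that]
      by (auto intro!: derivative_eq_intros simp: nonpos_pos power2_eq_square power3_eq_cube numeral_2_eq_2 mult_ac)
  qed
  have z: "0 \<in> {-\<epsilon><..<\<epsilon>}" "G 0 = 0" using epos by (auto simp: G_def)
  have sY: "s x = Y x - G1 0" for x
    unfolding s_def Y_def G1_def using th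
    by (simp add: score_eq D1_def ca_def cc_def Tst_def aa_def bb_def field_simps)
  show "integrable lborel (\<lambda>x. blpdf th x * s x ^ 2)" unfolding sY by (rule central(1)[OF z])
  show "integrable lborel (\<lambda>x. blpdf th x * s x ^ 3)" unfolding sY by (rule central(3)[OF z])
  show "(\<integral>x. blpdf th x * s x ^ 2 \<partial>lborel) =
       aa v ^ 2 * Polygamma 1 (aa th) + bb v ^ 2 * Polygamma 1 (bb th) - fst v ^ 2 * Polygamma 1 (fst th)"
    unfolding sY central(2)[OF z] by (simp add: G2_def)
  show "(\<integral>x. blpdf th x * s x ^ 3 \<partial>lborel) =
       aa v ^ 3 * Polygamma 2 (aa th) + bb v ^ 3 * Polygamma 2 (bb th) - fst v ^ 3 * Polygamma 2 (fst th)"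
    unfolding sY central(4)[OF z] by (simp add: G3_def)
qed

definition H :: "nat \<Rightarrow> nat \<Rightarrow> real \<times> real \<Rightarrow> real" where
  "H i j th = ca i * ca j * Polygamma 1 (aa th) + 1/4 * Polygamma 1 (bb th) - cc i * cc j * Polygamma 1 (fst th)"
definition T3 :: "nat \<Rightarrow> nat \<Rightarrow> nat \<Rightarrow> real \<times> real \<Rightarrow> real" where
  "T3 i j k th = ca i * ca j * ca k * Polygamma 2 (aa th) + 1/8 * Polygamma 2 (bb th) - cc i * cc j * cc k * Polygamma 2 (fst th)"

lemma mom_facts:
  assumes th: "th \<in> Theta"
  defines "f \<equiv> blpdf th" and "S1 \<equiv> score 1 th" and "S2 \<equiv> score 2 th"
  shows "integrable lborel (\<lambda>x. f x * S1 x ^ 2)" "(\<integral>x. f x * S1 x ^ 2 \<partial>lborel) = H 1 1 th"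
    "integrable lborel (\<lambda>x. f x * S2 x ^ 2)" "(\<integral>x. f x * S2 x ^ 2 \<partial>lborel) = H 2 2 th"
    "integrable lborel (\<lambda>x. f x * (S1 x + S2 x) ^ 2)" "(\<integral>x. f x * (S1 x + S2 x) ^ 2 \<partial>lborel) = H 1 1 th + 2 * H 1 2 th + H 2 2 th"
    "integrable lborel (\<lambda>x. f x * S1 x ^ 3)" "(\<integral>x. f x * S1 x ^ 3 \<partial>lborel) = T3 1 1 1 th"
    "integrable lborel (\<lambda>x. f x * S2 x ^ 3)" "(\<integral>x. f x * S2 x ^ 3 \<partial>lborel) = T3 2 2 2 th"
    "integrable lborel (\<lambda>x. f x * (S1 x + S2 x) ^ 3)" "(\<integral>x. f x * (S1 x + S2 x) ^ 3 \<partial>lborel) = T3 1 1 1 th + 3 * T3 1 1 2 th + 3 * T3 1 2 2 th + T3 2 2 2 th"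
    "integrable lborel (\<lambda>x. f x * (S1 x - S2 x) ^ 3)" "(\<integral>x. f x * (S1 x - S2 x) ^ 3 \<partial>lborel) = T3 1 1 1 th - 3 * T3 1 1 2 th + 3 * T3 1 2 2 th - T3 2 2 2 th"
proof -
  note d10 = dir_mom[OF th, of "(1,0)", folded f_def S1_def S2_def]
  note d01 = dir_mom[OF th, of "(0,1)", folded f_def S1_def S2_def]
  note d11 = dir_mom[OF th, of "(1,1)", folded f_def S1_def S2_def]
  note d1m = dir_mom[OF th, of "(1,-1)", folded f_def S1_def S2_def]
  show "integrable lborel (\<lambda>x. f x * S1 x ^ 2)" using d10(1) by simp
  show "(\<integral>x. f x * S1 x ^ 2 \<partial>lborel) = H 1 1 th" using d10(2) by (simp add: H_def ca_def cc_def aa_def bb_def power2_eq_square)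
  show "integrable lborel (\<lambda>x. f x * S2 x ^ 2)" using d01(1) by simp
  show "(\<integral>x. f x * S2 x ^ 2 \<partial>lborel) = H 2 2 th" using d01(2) by (simp add: H_def ca_def cc_def aa_def bb_def power2_eq_square)
  show "integrable lborel (\<lambda>x. f x * (S1 x + S2 x) ^ 2)" using d11(1) by simp
  show "(\<integral>x. f x * (S1 x + S2 x) ^ 2 \<partial>lborel) = H 1 1 th + 2 * H 1 2 th + H 2 2 th"
    using d11(2) by (simp add: H_def ca_def cc_def aa_def bb_def power2_eq_square)
  show "integrable lborel (\<lambda>x. f x * S1 x ^ 3)" using d10(3) by simp
  show "(\<integral>x. f x * S1 x ^ 3 \<partial>lborel) = T3 1 1 1 th" using d10(4) by (simp add: T3_def ca_def cc_def aa_def bb_def power3_eq_cube)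
  show "integrable lborel (\<lambda>x. f x * S2 x ^ 3)" using d01(3) by simp
  show "(\<integral>x. f x * S2 x ^ 3 \<partial>lborel) = T3 2 2 2 th" using d01(4) by (simp add: T3_def ca_def cc_def aa_def bb_def power3_eq_cube)
  show "integrable lborel (\<lambda>x. f x * (S1 x + S2 x) ^ 3)" using d11(3) by simp
  show "(\<integral>x. f x * (S1 x + S2 x) ^ 3 \<partial>lborel) = T3 1 1 1 th + 3 * T3 1 1 2 th + 3 * T3 1 2 2 th + T3 2 2 2 th"
    using d11(4) by (simp add: T3_def ca_def cc_def aa_def bb_def power3_eq_cube)
  show "integrable lborel (\<lambda>x. f x * (S1 x - S2 x) ^ 3)" using d1m(3) by simp
  show "(\<integral>x. f x * (S1 x - S2 x) ^ 3 \<partial>lborel) = T3 1 1 1 th - 3 * T3 1 1 2 th + 3 * T3 1 2 2 th - T3 2 2 2 th"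
    using d1m(4) by (simp add: T3_def ca_def cc_def aa_def bb_def power3_eq_cube)
qed

lemma H_sym: "H i j th = H j i th" by (simp add: H_def mult.commute)
lemma T3_sym: "T3 i j k th = T3 j i k th" "T3 i j k th = T3 i k j th"
  by (simp_all add: T3_def mult_ac)

lemma fisher_eq:
  assumes th: "th \<in> Theta" and ij: "i \<in> {1,2}" "j \<in> {1,2}"
  shows "fisher i j th = H i j th"
proof -
  define f where "f = blpdf th"
  define S1 where "S1 = score 1 th"
  define S2 where "S2 = score 2 th"
  note m = mom_facts[OF th, folded f_def S1_def S2_def]
  have e11: "fisher 1 1 th = H 1 1 th"
    using m(2) by (simp add: fisher_def Ex_def f_def S1_def power2_eq_square)
  have e22: "fisher 2 2 th = H 2 2 th"
    using m(4) by (simp add: fisher_def Ex_def f_def S2_def power2_eq_square)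
  have p: "f x * (S1 x * S2 x) = (f x * (S1 x + S2 x) ^ 2 - f x * S1 x ^ 2 - f x * S2 x ^ 2) / 2" for x
    by (simp add: power2_eq_square field_simps)
  have "(\<integral>x. f x * (S1 x * S2 x) \<partial>lborel) = ((H 1 1 th + 2 * H 1 2 th + H 2 2 th) - H 1 1 th - H 2 2 th) / 2"
    unfolding p using m(1-6) by (simp add: Bochner_Integration.integral_diff)
  then have e12: "fisher 1 2 th = H 1 2 th"
    by (simp add: fisher_def Ex_def f_def S1_def S2_def)
  have e21: "fisher 2 1 th = H 2 1 th"
    using e12 H_sym[of 1 2 th] by (simp add: fisher_def Ex_def mult.commute)
  show ?thesis using ij e11 e12 e21 e22 by auto
qed

lemma skewT_eq:
  assumes th: "th \<in> Theta" and ijk: "i \<in> {1,2}" "j \<in> {1,2}" "k \<in> {1,2}"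
  shows "skewT i j k th = T3 i j k th"
proof -
  define f where "f = blpdf th"
  define S1 where "S1 = score 1 th"
  define S2 where "S2 = score 2 th"
  note m = mom_facts[OF th, folded f_def S1_def S2_def]
  have sk: "skewT i j k th = (\<integral>x. f x * (score i th x * score j th x * score k th x) \<partial>lborel)"
    by (simp add: skewT_def Ex_def f_def)
  have e111: "(\<integral>x. f x * (S1 x * S1 x * S1 x) \<partial>lborel) = T3 1 1 1 th"
    using m(8) by (simp add: power3_eq_cube)
  have e222: "(\<integral>x. f x * (S2 x * S2 x * S2 x) \<partial>lborel) = T3 2 2 2 th"
    using m(10) by (simp add: power3_eq_cube)
  have p1: "f x * (S1 x * S1 x * S2 x) = (f x * (S1 x + S2 x) ^ 3 - f x * (S1 x - S2 x) ^ 3 - 2 * (f x * S2 x ^ 3)) / 6" for x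
    by (simp add: power3_eq_cube field_simps)
  have p2: "f x * (S1 x * S2 x * S2 x) = (f x * (S1 x + S2 x) ^ 3 + f x * (S1 x - S2 x) ^ 3 - 2 * (f x * S1 x ^ 3)) / 6" for x
    by (simp add: power3_eq_cube field_simps)
  have e112: "(\<integral>x. f x * (S1 x * S1 x * S2 x) \<partial>lborel) = T3 1 1 2 th"
  proof -
    have "(\<integral>x. f x * (S1 x * S1 x * S2 x) \<partial>lborel) =
      ((T3 1 1 1 th + 3 * T3 1 1 2 th + 3 * T3 1 2 2 th + T3 2 2 2 th) - (T3 1 1 1 th - 3 * T3 1 1 2 th + 3 * T3 1 2 2 th - T3 2 2 2 th) - 2 * T3 2 2 2 th) / 6"
      unfolding p1 using m(7-14) by (simp add: Bochner_Integration.integral_diff)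
    then show ?thesis by simp
  qed
  have e122: "(\<integral>x. f x * (S1 x * S2 x * S2 x) \<partial>lborel) = T3 1 2 2 th"
  proof -
    have "(\<integral>x. f x * (S1 x * S2 x * S2 x) \<partial>lborel) =
      ((T3 1 1 1 th + 3 * T3 1 1 2 th + 3 * T3 1 2 2 th + T3 2 2 2 th) + (T3 1 1 1 th - 3 * T3 1 1 2 th + 3 * T3 1 2 2 th - T3 2 2 2 th) - 2 * T3 1 1 1 th) / 6"
      unfolding p2 using m(7-14) by (simp add: Bochner_Integration.integral_diff Bochner_Integration.integral_add)
    then show ?thesis by simp
  qed
  have sym: "T3 1 2 1 th = T3 1 1 2 th" "T3 2 1 1 th = T3 1 1 2 th" "T3 2 1 2 th = T3 1 2 2 th" "T3 2 2 1 th = T3 1 2 2 th"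
    by (simp_all add: T3_def mult_ac)
  have c121: "(\<integral>x. f x * (S1 x * S2 x * S1 x) \<partial>lborel) = T3 1 2 1 th"
    using e112 sym by (simp add: mult_ac)
  have c211: "(\<integral>x. f x * (S2 x * S1 x * S1 x) \<partial>lborel) = T3 2 1 1 th"
    using e112 sym by (simp add: mult_ac)
  have c212: "(\<integral>x. f x * (S2 x * S1 x * S2 x) \<partial>lborel) = T3 2 1 2 th"
    using e122 sym by (simp add: mult_ac)
  have c221: "(\<integral>x. f x * (S2 x * S2 x * S1 x) \<partial>lborel) = T3 2 2 1 th"
    using e122 sym by (simp add: mult_ac)
  show ?thesis using ijk e111 e222 e112 e122 c121 c211 c212 c221 unfolding sk S1_def S2_def by auto
qed

lemma integral_pos_cont:
  fixes g :: "real \<Rightarrow> real"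
  assumes cont: "continuous_on UNIV g" and nn: "\<And>x. 0 \<le> g x" and int: "integrable lborel g"
    and x0: "g x0 > 0"
  shows "(\<integral>x. g x \<partial>lborel) > 0"
proof -
  have "isCont g x0" using cont by (simp add: continuous_on_eq_continuous_at)
  then obtain \<delta> where d: "\<delta> > 0" and dd: "\<And>x. dist x x0 < \<delta> \<Longrightarrow> dist (g x) (g x0) < g x0 / 2"
    using x0 unfolding continuous_at_eps_delta by (metis half_gt_zero)
  define c where "c = g x0 / 2"
  have cpos: "c > 0" using x0 by (simp add: c_def)
  have le: "c * indicator {x0 - \<delta>/2..x0 + \<delta>/2} x \<le> g x" for x
  proof (cases "x \<in> {x0 - \<delta>/2..x0 + \<delta>/2}")
    case True
    then have "dist x x0 < \<delta>" using d by (auto simp: dist_real_def abs_le_iff)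
    then have "dist (g x) (g x0) < g x0 / 2" by (rule dd)
    then have "\<bar>g x - g x0\<bar> < g x0 / 2" by (simp add: dist_real_def)
    then have "g x > c" unfolding c_def using abs_ge_minus_self[of "g x - g x0"] by linarith
    then show ?thesis using True by simp
  qed (use nn in auto)
  have ii: "integrable lborel (\<lambda>x. c * indicator {x0 - \<delta>/2..x0 + \<delta>/2} x :: real)"
    by (intro integrable_mult_right integrable_real_indicator) (auto simp: emeasure_lborel_Icc_eq)
  have "(\<integral>x. c * indicator {x0 - \<delta>/2..x0 + \<delta>/2} x \<partial>lborel) \<le> (\<integral>x. g x \<partial>lborel)"
    by (rule integral_mono[OF ii int le])
  moreover have "(\<integral>x. c * indicator {x0 - \<delta>/2..x0 + \<delta>/2} x \<partial>lborel) = c * \<delta>"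
    using d by (simp add: measure_def)
  moreover have "c * \<delta> > 0" using cpos d by simp
  ultimately show ?thesis by linarith
qed

lemma ln_sech_1: "ln (sech 1) \<noteq> 0"
proof -
  have "cosh (1::real) > 1" using cosh_real_ge_1[of 1] cosh_real_one_iff[of 1] by linarith
  then have "sech 1 < 1" "sech 1 > 0" by (auto simp: sech_def)
  then show ?thesis by simp
qed

lemma score_nonzero:
  fixes v1 v2 C1 C2 :: real
  assumes "(v1, v2) \<noteq> (0, 0)"
  shows "\<exists>x. v1 * (ln (sech x) - ln 2 - C1) + v2 * (x - C2) \<noteq> 0"
proof (rule ccontr)
  assume "\<not> ?thesis"
  then have z: "\<And>x. v1 * (ln (sech x) - ln 2 - C1) + v2 * (x - C2) = 0" by auto
  have s: "sech (-1) = sech 1" by (simp add: sech_def)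
  have "v2 = 0" using z[of 1] z[of "-1"] s by (simp add: algebra_simps)
  moreover have "v1 * ln (sech 1) = 0" using z[of 1] z[of 0] \<open>v2 = 0\<close> by (simp add: sech_def algebra_simps)
  ultimately show False using assms ln_sech_1 by auto
qed

lemma Q_pos:
  assumes th: "th \<in> Theta" and v: "v \<noteq> (0, 0)"
  shows "fst v ^ 2 * H 1 1 th + 2 * fst v * snd v * H 1 2 th + snd v ^ 2 * H 2 2 th > 0"
proof -
  define s where "s = (\<lambda>x. fst v * score 1 th x + snd v * score 2 th x)"
  have sE: "s x = fst v * (ln (sech x) - ln 2 - D1 1 th) + snd v * (x - D1 2 th)" for x
    using th by (simp add: s_def score_eq Tst_def)
  obtain x0 where x0: "s x0 \<noteq> 0" using score_nonzero[of "fst v" "snd v"] v unfolding sE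
    by (metis prod.collapse)
  have "(\<integral>x. blpdf th x * s x ^ 2 \<partial>lborel) > 0"
  proof (rule integral_pos_cont[of _ x0])
    show "continuous_on UNIV (\<lambda>x. blpdf th x * s x ^ 2)"
      unfolding sE using blpdf_cont[of th] unfolding sech_def
      by (auto intro!: continuous_intros)
    show "0 \<le> blpdf th x * s x ^ 2" for x using blpdf_pos[OF th, of x] by simp
    show "integrable lborel (\<lambda>x. blpdf th x * s x ^ 2)" using dir_mom(1)[OF th, of v] by (simp add: s_def)
    show "blpdf th x0 * s x0 ^ 2 > 0" using x0 blpdf_pos[OF th, of x0] by simp
  qed
  also have "(\<integral>x. blpdf th x * s x ^ 2 \<partial>lborel) =
      aa v ^ 2 * Polygamma 1 (aa th) + bb v ^ 2 * Polygamma 1 (bb th) - fst v ^ 2 * Polygamma 1 (fst th)"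
    using dir_mom(2)[OF th, of v] by (simp add: s_def)
  also have "\<dots> = fst v ^ 2 * H 1 1 th + 2 * fst v * snd v * H 1 2 th + snd v ^ 2 * H 2 2 th"
    by (simp add: H_def aa_def bb_def ca_def cc_def power2_eq_square field_simps)
  finally show ?thesis .
qed

definition detH :: "real \<times> real \<Rightarrow> real" where
  "detH th = H 1 1 th * H 2 2 th - H 1 2 th * H 2 1 th"

lemma H22_pos: "th \<in> Theta \<Longrightarrow> H 2 2 th > 0"
  using Q_pos[of th "(0,1)"] by simp

lemma detH_pos:
  assumes th: "th \<in> Theta"
  shows "detH th > 0"
proof -
  have h: "H 2 2 th > 0" by (rule H22_pos[OF th])
  have "(H 2 2 th, - H 1 2 th) \<noteq> (0, 0)" using h by auto
  from Q_pos[OF th this] have "H 2 2 th * (H 1 1 th * H 2 2 th - H 1 2 th * H 1 2 th) > 0"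
    by (simp add: power2_eq_square algebra_simps)
  then have "H 1 1 th * H 2 2 th - H 1 2 th * H 1 2 th > 0" using h by (simp add: zero_less_mult_iff)
  moreover have "H 2 1 th = H 1 2 th" by (rule H_sym)
  ultimately show ?thesis unfolding detH_def by simp
qed

definition Q4 :: "nat \<Rightarrow> nat \<Rightarrow> nat \<Rightarrow> nat \<Rightarrow> real \<times> real \<Rightarrow> real" where
  "Q4 i j k l th = ca i * ca j * ca k * ca l * Polygamma 3 (aa th) + 1/16 * Polygamma 3 (bb th)
     - cc i * cc j * cc k * cc l * Polygamma 3 (fst th)"

definition NN :: "nat \<Rightarrow> nat \<Rightarrow> real \<times> real \<Rightarrow> real" where
  "NN s k th = (if s = 1 \<and> k = 1 then H 2 2 th else if s = 2 \<and> k = 2 then H 1 1 th else - H s k th)"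
definition dNN :: "nat \<Rightarrow> nat \<Rightarrow> nat \<Rightarrow> real \<times> real \<Rightarrow> real" where
  "dNN i s k th = (if s = 1 \<and> k = 1 then T3 i 2 2 th else if s = 2 \<and> k = 2 then T3 i 1 1 th else - T3 i s k th)"
definition HI :: "nat \<Rightarrow> nat \<Rightarrow> real \<times> real \<Rightarrow> real" where
  "HI s k th = NN s k th / detH th"
definition dHI :: "nat \<Rightarrow> nat \<Rightarrow> nat \<Rightarrow> real \<times> real \<Rightarrow> real" where
  "dHI i s n th = - (\<Sum>p\<in>{1,2}. \<Sum>q\<in>{1,2}. HI s p th * T3 i p q th * HI q n th)"
definition AC :: "real \<Rightarrow> nat \<Rightarrow> nat \<Rightarrow> nat \<Rightarrow> real \<times> real \<Rightarrow> real" where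
  "AC \<alpha> i j k th = (\<Sum>s\<in>{1,2}. ((1 - \<alpha>) / 2 * T3 i j s th) * HI s k th)"
definition dAC :: "real \<Rightarrow> nat \<Rightarrow> nat \<Rightarrow> nat \<Rightarrow> nat \<Rightarrow> real \<times> real \<Rightarrow> real" where
  "dAC \<alpha> i j k n th = (\<Sum>s\<in>{1,2}. (1 - \<alpha>) / 2 * (Q4 i j k s th * HI s n th + T3 j k s th * dHI i s n th))"

lemma Pg_line:
  assumes "x > 0"
  shows "((\<lambda>t. Polygamma n (x + t * k)) has_real_derivative k * Polygamma (Suc n) x) (at 0)"
  using assms by (auto intro!: derivative_eq_intros simp: nonpos_pos mult.commute)

lemma Pg_line2:
  assumes "x > 0" "m = Suc n"
  shows "((\<lambda>t. Polygamma n (x + t * k)) has_real_derivative k * Polygamma m x) (at 0)"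
  using Pg_line[OF assms(1)] assms(2) by simp

lemma fst_line: "fst (th + t *\<^sub>R cdir i) = fst th + t * cc i" by simp

lemma DERIV_H:
  assumes th: "th \<in> Theta"
  shows "((\<lambda>t. H j k (th + t *\<^sub>R cdir i)) has_real_derivative T3 i j k th) (at 0)"
proof -
  have p: "aa th > 0" "bb th > 0" "fst th > 0" using th fst_aa_bb[of th] by (auto simp: Theta_iff)
  have "((\<lambda>t. ca j * ca k * Polygamma 1 (aa th + t * ca i) + 1/4 * Polygamma 1 (bb th + t * (1/2))
       - cc j * cc k * Polygamma 1 (fst th + t * cc i)) has_real_derivative
       ca j * ca k * (ca i * Polygamma 2 (aa th)) + 1/4 * (1/2 * Polygamma 2 (bb th))
       - cc j * cc k * (cc i * Polygamma 2 (fst th))) (at 0)"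
    by (intro DERIV_diff DERIV_add DERIV_cmult Pg_line2) (use p in auto)
  then show ?thesis unfolding H_def T3_def fst_line aa_line bb_line aa_cdir bb_cdir
    by (simp add: mult_ac)
qed

lemma DERIV_T3:
  assumes th: "th \<in> Theta"
  shows "((\<lambda>t. T3 j k l (th + t *\<^sub>R cdir i)) has_real_derivative Q4 i j k l th) (at 0)"
proof -
  have p: "aa th > 0" "bb th > 0" "fst th > 0" using th fst_aa_bb[of th] by (auto simp: Theta_iff)
  have "((\<lambda>t. ca j * ca k * ca l * Polygamma 2 (aa th + t * ca i) + 1/8 * Polygamma 2 (bb th + t * (1/2))
       - cc j * cc k * cc l * Polygamma 2 (fst th + t * cc i)) has_real_derivative
       ca j * ca k * ca l * (ca i * Polygamma 3 (aa th)) + 1/8 * (1/2 * Polygamma 3 (bb th))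
       - cc j * cc k * cc l * (cc i * Polygamma 3 (fst th))) (at 0)"
    by (intro DERIV_diff DERIV_add DERIV_cmult Pg_line2) (use p in auto)
  then show ?thesis unfolding Q4_def T3_def fst_line aa_line bb_line aa_cdir bb_cdir
    by (simp add: mult_ac)
qed

lemma pd_fisher:
  assumes th: "th \<in> Theta" and jk: "j \<in> {1,2}" "k \<in> {1,2}"
  shows "pd i (fisher j k) th = T3 i j k th"
  by (rule pd_local[OF th _ DERIV_H[OF th]]) (use fisher_eq jk in auto)

lemma T3_perm: "T3 i j k th = T3 j k i th" "T3 i j k th = T3 k i j th" "T3 i j k th = T3 j i k th"
  by (simp_all add: T3_def mult_ac)

lemma christoffel_eq:
  assumes th: "th \<in> Theta" and ijk: "i \<in> {1,2}" "j \<in> {1,2}" "k \<in> {1,2}"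
  shows "christoffel i j k th = T3 i j k th / 2"
  using ijk by (simp add: christoffel_def pd_fisher[OF th] T3_def mult_ac)

lemma alpha_conn_low_eq:
  assumes th: "th \<in> Theta" and ijk: "i \<in> {1,2}" "j \<in> {1,2}" "k \<in> {1,2}"
  shows "alpha_conn_low \<alpha> i j k th = (1 - \<alpha>) / 2 * T3 i j k th"
  using ijk by (simp add: alpha_conn_low_def christoffel_eq[OF th] skewT_eq[OF th] field_simps)

lemma detG_eq: "th \<in> Theta \<Longrightarrow> detG th = detH th"
  by (simp add: detG_def detH_def fisher_eq)

lemma fisher_inv_eq:
  assumes th: "th \<in> Theta" and sk: "s \<in> {1,2}" "k \<in> {1,2}"
  shows "fisher_inv s k th = HI s k th"
  using sk by (auto simp: fisher_inv_def HI_def NN_def detG_eq[OF th] fisher_eq[OF th])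

lemma alpha_conn_eq:
  assumes th: "th \<in> Theta" and ijk: "i \<in> {1,2}" "j \<in> {1,2}" "k \<in> {1,2}"
  shows "alpha_conn \<alpha> i j k th = AC \<alpha> i j k th"
  unfolding alpha_conn_def AC_def
  by (rule sum.cong) (use ijk in \<open>auto simp: alpha_conn_low_eq[OF th] fisher_inv_eq[OF th]\<close>)

lemma DERIV_NN:
  assumes th: "th \<in> Theta"
  shows "((\<lambda>t. NN s k (th + t *\<^sub>R cdir i)) has_real_derivative dNN i s k th) (at 0)"
proof (cases "s = 1 \<and> k = 1")
  case True
  then show ?thesis using DERIV_H[OF th, of 2 2 i] by (simp add: NN_def dNN_def)
next
  case F1: False
  show ?thesis
  proof (cases "s = 2 \<and> k = 2")
    case True
    then show ?thesis using DERIV_H[OF th, of 1 1 i] by (simp add: NN_def dNN_def)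
  next
    case False
    then have "(\<lambda>t. NN s k (th + t *\<^sub>R cdir i)) = (\<lambda>t. - H s k (th + t *\<^sub>R cdir i))" "dNN i s k th = - T3 i s k th"
      using F1 by (auto simp: NN_def dNN_def fun_eq_iff)
    then show ?thesis using DERIV_minus[OF DERIV_H[OF th, of s k i]] by simp
  qed
qed

lemma DERIV_detH:
  assumes th: "th \<in> Theta"
  shows "((\<lambda>t. detH (th + t *\<^sub>R cdir i)) has_real_derivative
    (T3 i 1 1 th * H 2 2 th + H 1 1 th * T3 i 2 2 th) - (T3 i 1 2 th * H 2 1 th + H 1 2 th * T3 i 2 1 th)) (at 0)"
proof -
  have "((\<lambda>t. H 1 1 (th + t *\<^sub>R cdir i) * H 2 2 (th + t *\<^sub>R cdir i) - H 1 2 (th + t *\<^sub>R cdir i) * H 2 1 (th + t *\<^sub>R cdir i))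
    has_real_derivative (T3 i 1 1 th * H 2 2 (th + 0 *\<^sub>R cdir i) + T3 i 2 2 th * H 1 1 (th + 0 *\<^sub>R cdir i))
     - (T3 i 1 2 th * H 2 1 (th + 0 *\<^sub>R cdir i) + T3 i 2 1 th * H 1 2 (th + 0 *\<^sub>R cdir i))) (at 0)"
    by (intro DERIV_diff DERIV_mult DERIV_H[OF th])
  then show ?thesis unfolding detH_def by (simp add: mult.commute)
qed

lemma DERIV_HI:
  assumes th: "th \<in> Theta" and sn: "s \<in> {1,2}" "n \<in> {1,2}"
  shows "((\<lambda>t. HI s n (th + t *\<^sub>R cdir i)) has_real_derivative dHI i s n th) (at 0)"
proof -
  have d: "detH th \<noteq> 0" using detH_pos[OF th] by simp
  have D: "((\<lambda>t. HI s n (th + t *\<^sub>R cdir i)) has_real_derivative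
     (dNN i s n th * detH th - NN s n th * ((T3 i 1 1 th * H 2 2 th + H 1 1 th * T3 i 2 2 th) - (T3 i 1 2 th * H 2 1 th + H 1 2 th * T3 i 2 1 th)))
      / (detH th * detH th)) (at 0)"
  proof -
    have "((\<lambda>t. NN s n (th + t *\<^sub>R cdir i) / detH (th + t *\<^sub>R cdir i)) has_real_derivative
     (dNN i s n th * detH (th + 0 *\<^sub>R cdir i) - NN s n (th + 0 *\<^sub>R cdir i) * ((T3 i 1 1 th * H 2 2 th + H 1 1 th * T3 i 2 2 th) - (T3 i 1 2 th * H 2 1 th + H 1 2 th * T3 i 2 1 th)))
      / (detH (th + 0 *\<^sub>R cdir i) * detH (th + 0 *\<^sub>R cdir i))) (at 0)"
      by (rule DERIV_divide[OF DERIV_NN[OF th] DERIV_detH[OF th]]) (use d in simp)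
    then show ?thesis unfolding HI_def by (simp only: scaleR_zero_left add.right_neutral)
  qed
  have h21: "H 2 1 th = H 1 2 th" "H 2 (Suc 0) th = H (Suc 0) 2 th" by (rule H_sym)+
  have t21: "T3 i 2 1 th = T3 i 1 2 th" "T3 i 2 (Suc 0) th = T3 i (Suc 0) 2 th" by (simp_all add: T3_def mult_ac)
  have eq2: "dHI i s n th = - (\<Sum>p\<in>{1,2}. \<Sum>q\<in>{1,2}. NN s p th * T3 i p q th * NN q n th) / (detH th * detH th)"
    unfolding dHI_def HI_def by (simp add: add_divide_distrib diff_divide_distrib)
  have eq1: "dNN i s n th * detH th - NN s n th * ((T3 i 1 1 th * H 2 2 th + H 1 1 th * T3 i 2 2 th) - (T3 i 1 2 th * H 2 1 th + H 1 2 th * T3 i 2 1 th))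
     = - (\<Sum>p\<in>{1,2}. \<Sum>q\<in>{1,2}. NN s p th * T3 i p q th * NN q n th)"
    using sn by (auto simp: NN_def dNN_def detH_def h21 t21 algebra_simps)
  have "(dNN i s n th * detH th - NN s n th * ((T3 i 1 1 th * H 2 2 th + H 1 1 th * T3 i 2 2 th) - (T3 i 1 2 th * H 2 1 th + H 1 2 th * T3 i 2 1 th)))
      / (detH th * detH th) = dHI i s n th"
    unfolding eq1 eq2 by simp
  with D show ?thesis by simp
qed

lemma pd_alpha_conn:
  assumes th: "th \<in> Theta" and jkn: "j \<in> {1,2}" "k \<in> {1,2}" "n \<in> {1,2}"
  shows "pd i (alpha_conn \<alpha> j k n) th = dAC \<alpha> i j k n th"
proof (rule pd_local[OF th])
  show "alpha_conn \<alpha> j k n eta = AC \<alpha> j k n eta" if "eta \<in> Theta" for eta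
    using alpha_conn_eq[OF that jkn] .
  have e: "AC \<alpha> j k n eta = (1 - \<alpha>) / 2 * T3 j k 1 eta * HI 1 n eta + (1 - \<alpha>) / 2 * T3 j k 2 eta * HI 2 n eta" for eta
    by (simp add: AC_def)
  have "((\<lambda>t. (1 - \<alpha>) / 2 * T3 j k 1 (th + t *\<^sub>R cdir i) * HI 1 n (th + t *\<^sub>R cdir i) +
      (1 - \<alpha>) / 2 * T3 j k 2 (th + t *\<^sub>R cdir i) * HI 2 n (th + t *\<^sub>R cdir i)) has_real_derivative
      ((1 - \<alpha>) / 2 * Q4 i j k 1 th * HI 1 n (th + 0 *\<^sub>R cdir i) + dHI i 1 n th * ((1 - \<alpha>) / 2 * T3 j k 1 (th + 0 *\<^sub>R cdir i))) +
      ((1 - \<alpha>) / 2 * Q4 i j k 2 th * HI 2 n (th + 0 *\<^sub>R cdir i) + dHI i 2 n th * ((1 - \<alpha>) / 2 * T3 j k 2 (th + 0 *\<^sub>R cdir i)))) (at 0)"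
    using jkn by (intro DERIV_add DERIV_mult DERIV_cmult DERIV_T3[OF th] DERIV_HI[OF th]) auto
  then show "((\<lambda>t. AC \<alpha> j k n (th + t *\<^sub>R cdir i)) has_real_derivative dAC \<alpha> i j k n th) (at 0)"
    unfolding e by (simp add: dAC_def algebra_simps)
qed

lemma alpha_curv_eq:
  assumes th: "th \<in> Theta" and ijkl: "i \<in> {1,2}" "j \<in> {1,2}" "k \<in> {1,2}" "l \<in> {1,2}"
  shows "alpha_curv \<alpha> i j k l th = (\<Sum>n\<in>{1,2}. (dAC \<alpha> i j k n th - dAC \<alpha> j i k n th
     + (\<Sum>m\<in>{1,2}. AC \<alpha> j k m th * AC \<alpha> i m n th - AC \<alpha> i k m th * AC \<alpha> j m n th)) * H n l th)"
  unfolding alpha_curv_def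
  using ijkl by (simp add: pd_alpha_conn[OF th] alpha_conn_eq[OF th] fisher_eq[OF th])

lemma flat_alg:
  "(\<Sum>n\<in>{1,2}. (dAC (-1) i j k n th - dAC (-1) j i k n th
     + (\<Sum>m\<in>{1,2}. AC (-1) j k m th * AC (-1) i m n th - AC (-1) i k m th * AC (-1) j m n th)) * H n l th) = 0"
proof -
  have q: "Q4 j i k s th = Q4 i j k s th" for s by (simp add: Q4_def mult_ac)
  show ?thesis unfolding dAC_def AC_def dHI_def by (simp add: q algebra_simps)
qed

lemma R0_alg:
  "(\<Sum>n\<in>{1,2}. (dAC 0 i j k n th - dAC 0 j i k n th
     + (\<Sum>m\<in>{1,2}. AC 0 j k m th * AC 0 i m n th - AC 0 i k m th * AC 0 j m n th)) * H n l th)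
   = 1/2 * (\<Sum>n\<in>{1,2}. (dAC (-1) i j k n th - dAC (-1) j i k n th
     + (\<Sum>m\<in>{1,2}. AC (-1) j k m th * AC (-1) i m n th - AC (-1) i k m th * AC (-1) j m n th)) * H n l th)
   - 1/4 * (\<Sum>n\<in>{1,2}. (\<Sum>m\<in>{1,2}. AC (-1) j k m th * AC (-1) i m n th - AC (-1) i k m th * AC (-1) j m n th) * H n l th)"
  unfolding dAC_def AC_def by (simp add: algebra_simps)

lemma inv_prod:
  fixes hA hB hC dt :: real
  assumes d1: "dt = hA * hC - hB * hB" and d2: "dt \<noteq> 0"
  shows "hC / dt * hA + (- hB / dt) * hB = 1" "hC / dt * hB + (- hB / dt) * hC = 0"
    "(- hB / dt) * hA + hA / dt * hB = 0" "(- hB / dt) * hB + hA / dt * hC = 1"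
proof -
  have "hC * hA - hB * hB = dt" by (simp add: d1 algebra_simps)
  then show "hC / dt * hA + (- hB / dt) * hB = 1" using d2 by (simp add: field_simps)
  show "hC / dt * hB + (- hB / dt) * hC = 0" by (simp add: field_simps)
  show "(- hB / dt) * hA + hA / dt * hB = 0" by (simp add: field_simps)
  have "hA * hC - hB * hB = dt" by (simp add: d1 algebra_simps)
  then show "(- hB / dt) * hB + hA / dt * hC = 1" using d2 by (simp add: field_simps)
qed

lemma HIH:
  assumes th: "th \<in> Theta"
  shows "HI 1 1 th * H 1 1 th + HI 1 2 th * H 2 1 th = 1"
    "HI 1 1 th * H 1 2 th + HI 1 2 th * H 2 2 th = 0"
    "HI 2 1 th * H 1 1 th + HI 2 2 th * H 2 1 th = 0"
    "HI 2 1 th * H 1 2 th + HI 2 2 th * H 2 2 th = 1"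
proof -
  have d: "detH th \<noteq> 0" using detH_pos[OF th] by simp
  have h21: "H 2 1 th = H 1 2 th" by (rule H_sym)
  have dd: "detH th = H 1 1 th * H 2 2 th - H 1 2 th * H 1 2 th" unfolding detH_def h21 by (rule refl)
  show "HI 1 1 th * H 1 1 th + HI 1 2 th * H 2 1 th = 1"
    "HI 1 1 th * H 1 2 th + HI 1 2 th * H 2 2 th = 0"
    "HI 2 1 th * H 1 1 th + HI 2 2 th * H 2 1 th = 0"
    "HI 2 1 th * H 1 2 th + HI 2 2 th * H 2 2 th = 1"
    using inv_prod[OF dd d] unfolding HI_def NN_def h21 by simp_all
qed

lemma ACH:
  assumes th: "th \<in> Theta" and l: "l \<in> {1,2}"
  shows "(\<Sum>n\<in>{1,2}. AC (-1) i m n th * H n l th) = T3 i m l th"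
proof -
  have e: "(\<Sum>n\<in>{1,2}. AC (-1) i m n th * H n l th) =
     T3 i m 1 th * (HI 1 1 th * H 1 l th + HI 1 2 th * H 2 l th) + T3 i m 2 th * (HI 2 1 th * H 1 l th + HI 2 2 th * H 2 l th)"
    by (simp add: AC_def algebra_simps)
  show ?thesis using l HIH[OF th] unfolding e by auto
qed

lemma P_eq:
  assumes th: "th \<in> Theta"
  shows "(\<Sum>n\<in>{1,2}. (\<Sum>m\<in>{1,2}. AC (-1) 2 1 m th * AC (-1) 1 m n th - AC (-1) 1 1 m th * AC (-1) 2 m n th) * H n 2 th)
    = (\<Sum>s\<in>{1,2}. \<Sum>m\<in>{1,2}. NN s m th * (T3 2 1 s th * T3 1 m 2 th - T3 1 1 s th * T3 2 m 2 th)) / detH th"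
proof -
  have d: "detH th \<noteq> 0" using detH_pos[OF th] by simp
  have "(\<Sum>n\<in>{1,2}. (\<Sum>m\<in>{1,2}. AC (-1) 2 1 m th * AC (-1) 1 m n th - AC (-1) 1 1 m th * AC (-1) 2 m n th) * H n 2 th)
     = (\<Sum>m\<in>{1,2}. AC (-1) 2 1 m th * (\<Sum>n\<in>{1,2}. AC (-1) 1 m n th * H n 2 th)
         - AC (-1) 1 1 m th * (\<Sum>n\<in>{1,2}. AC (-1) 2 m n th * H n 2 th))"
    by (simp add: algebra_simps)
  also have "\<dots> = (\<Sum>m\<in>{1,2}. AC (-1) 2 1 m th * T3 1 m 2 th - AC (-1) 1 1 m th * T3 2 m 2 th)"
  proof -
    have A1: "\<And>i m. (\<Sum>n\<in>{1,2}. AC (-1) i m n th * H n 2 th) = T3 i m 2 th" using ACH[OF th] by simp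
    show ?thesis by (simp only: A1)
  qed
  also have "\<dots> = (\<Sum>s\<in>{1,2}. \<Sum>m\<in>{1,2}. NN s m th * (T3 2 1 s th * T3 1 m 2 th - T3 1 1 s th * T3 2 m 2 th)) / detH th"
    using d by (simp add: AC_def HI_def field_simps)
  finally show ?thesis .
qed

lemma X_eq:
  "(\<Sum>s\<in>{1,2}. \<Sum>m\<in>{1,2}. NN s m th * (T3 2 1 s th * T3 1 m 2 th - T3 1 1 s th * T3 2 m 2 th))
   = - (Polygamma 2 (bb th) * (Polygamma 2 (aa th) * Polygamma 1 (fst th) - Polygamma 2 (fst th) * Polygamma 1 (aa th))
        - Polygamma 2 (fst th) * Polygamma 2 (aa th) * Polygamma 1 (bb th)) / 16"
  by (simp add: NN_def H_def T3_def ca_def cc_def field_simps; simp add: algebra_simps)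

lemma det_eq:
  "detH th = - (Polygamma 1 (fst th) * Polygamma 1 (aa th) + (Polygamma 1 (fst th) - Polygamma 1 (aa th)) * Polygamma 1 (bb th)) / 4"
  by (simp add: detH_def H_def ca_def cc_def field_simps; simp add: algebra_simps)

lemma fin_alg:
  fixes N D :: real
  assumes "D \<noteq> 0"
  shows "- (1/4) * ((- N / 16) / (- D / 4)) / (- D / 4) = N / (4 * D ^ 2)"
  using assms by (simp add: field_simps power2_eq_square)

theorem mainTheorem3:
  shows "(\<forall>\<alpha>\<in>{1, -1}. \<forall>th\<in>Theta. \<forall>i\<in>{1,2}. \<forall>j\<in>{1,2}. \<forall>k\<in>{1,2}. \<forall>l\<in>{1,2}.
            alpha_curv \<alpha> i j k l th = 0)
       \<and> (\<forall>th\<in>Theta.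
            let a = (fst th - snd th) / 2; b = (fst th + snd th) / 2;
                p = Polygamma 1 a; q = Polygamma 1 b; r = Polygamma 1 (fst th);
                s = Polygamma 2 a; u = Polygamma 2 b; v = Polygamma 2 (fst th)
            in alpha_curv 0 1 2 1 2 th / detG th
               = (u * (s * r - v * p) - v * s * q) / (4 * (r * p + (r - p) * q)^2))"
proof (intro conjI ballI)
  fix \<alpha> :: real and th :: "real \<times> real" and i j k l :: nat
  assume a: "\<alpha> \<in> {1, -1}" and th: "th \<in> Theta" and ijkl: "i \<in> {1,2}" "j \<in> {1,2}" "k \<in> {1,2}" "l \<in> {1,2}"
  show "alpha_curv \<alpha> i j k l th = 0"
  proof (cases "\<alpha> = 1")
    case True
    then show ?thesis unfolding alpha_curv_eq[OF th ijkl] by (simp add: dAC_def AC_def)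
  next
    case False
    then have "\<alpha> = -1" using a by auto
    then show ?thesis unfolding alpha_curv_eq[OF th ijkl] using flat_alg by simp
  qed
next
  fix th assume th: "th \<in> Theta"
  define p where "p = Polygamma 1 (aa th)"
  define q where "q = Polygamma 1 (bb th)"
  define r where "r = Polygamma 1 (fst th)"
  define s where "s = Polygamma 2 (aa th)"
  define u where "u = Polygamma 2 (bb th)"
  define v where "v = Polygamma 2 (fst th)"
  define X where "X = (\<Sum>s\<in>{1,2}. \<Sum>m\<in>{1,2}. NN s m th * (T3 2 1 s th * T3 1 m 2 th - T3 1 1 s th * T3 2 m 2 th))"
  have d: "detH th \<noteq> 0" using detH_pos[OF th] by simp
  have R: "alpha_curv 0 1 2 1 2 th = - (1/4) * (X / detH th)"
  proof -
    have "alpha_curv 0 1 2 1 2 th = (\<Sum>n\<in>{1,2}. (dAC 0 1 2 1 n th - dAC 0 2 1 1 n th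
     + (\<Sum>m\<in>{1,2}. AC 0 2 1 m th * AC 0 1 m n th - AC 0 1 1 m th * AC 0 2 m n th)) * H n 2 th)"
      by (rule alpha_curv_eq[OF th]) simp_all
    also have "\<dots> = 1/2 * 0 - 1/4 * (\<Sum>n\<in>{1,2}. (\<Sum>m\<in>{1,2}. AC (-1) 2 1 m th * AC (-1) 1 m n th - AC (-1) 1 1 m th * AC (-1) 2 m n th) * H n 2 th)"
      unfolding R0_alg flat_alg ..
    also have "\<dots> = - (1/4) * (X / detH th)" unfolding P_eq[OF th] X_def by simp
    finally show ?thesis .
  qed
  have Xe: "X = - (u * (s * r - v * p) - v * s * q) / 16" unfolding X_def X_eq p_def q_def r_def s_def u_def v_def ..
  have De: "detH th = - (r * p + (r - p) * q) / 4" unfolding det_eq p_def q_def r_def ..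
  have D: "r * p + (r - p) * q \<noteq> 0" using d De by auto
  have "alpha_curv 0 1 2 1 2 th / detG th = (u * (s * r - v * p) - v * s * q) / (4 * (r * p + (r - p) * q)^2)"
    unfolding detG_eq[OF th] R Xe De by (rule fin_alg[OF D])
  then show "let a = (fst th - snd th) / 2; b = (fst th + snd th) / 2;
                p = Polygamma 1 a; q = Polygamma 1 b; r = Polygamma 1 (fst th);
                s = Polygamma 2 a; u = Polygamma 2 b; v = Polygamma 2 (fst th)
            in alpha_curv 0 1 2 1 2 th / detG th
               = (u * (s * r - v * p) - v * s * q) / (4 * (r * p + (r - p) * q)^2)"
    by (simp add: Let_def p_def q_def r_def s_def u_def v_def aa_def bb_def)
qed

end
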